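(* Let $(G,\cdot)$ be a group and $\psi\in\operatorname{End}(G,\cdot)$ with $\psi([[G,\psi],G])\le Z(G,\cdot)$. Then each of the following maps $G\times G\to G\times G$ defines a set-theoretic non-degenerate solution $(G,r)$ of the Yang--Baxter equation: $$r_1(g,h)=\big(\psi(g)^{-1}h\,\psi(g),\ \psi(g^{-1}h)\,h^{-1}\psi(g)\,g\,\psi(g)^{-1}h\,\psi(h^{-1}g)\big);$$ $$r_2(g,h)=\big(g\,\psi(g)^{-1}h\,\psi(g)\,g^{-1},\ \psi(h)\,g\,\psi(h)^{-1}\big);$$ $$r_3(g,h)=\big(\psi(g)\,h\,\psi(g)^{-1},\ \psi(g)\,h^{-1}\psi(g)^{-1}g\,h\big);$$ $$r_4(g,h)=\big(g\,h\,\psi(h)^{-1}g^{-1}\psi(h),\ \psi(h)^{-1}g\,\psi(h)\big).$$ Moreover $r_1$ and $r_2$ are mutually inverse and they coincide if and only if $(G,\cdot)$ is abelian; $r_3$ and $r_4$ are mutually inverse and they coincide if and only if $g\,\psi(g)^{-1}h\,\psi(g)=h\,\psi(h)^{-1}g\,\psi(h)$ for all $g,h\in G$.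
   Context: All products are in $(G,\cdot)$. For $\psi\in\operatorname{End}(G,\cdot)$, $[g,\psi]=g\cdot\psi(g)^{-1}$ and $[G,\psi]$ is the subgroup generated by these elements; $[x,y]=xyx^{-1}y^{-1}$ and $[A,B]$ is the subgroup generated by $[a,b]$, $a\in A,b\in B$; $Z(G,\cdot)$ is the centre. A set-theoretic solution of the Yang--Baxter equation is a pair $(X,r)$ with $X\neq\emptyset$ and $r\colon X\times X\to X\times X$, $r(x,y)=(\sigma_x(y),\tau_y(x))$, a bijection satisfying $(r\times\mathrm{id}_X)(\mathrm{id}_X\times r)(r\times\mathrm{id}_X)=(\mathrm{id}_X\times r)(r\times\mathrm{id}_X)(\mathrm{id}_X\times r)$; it is non-degenerate if all $\sigma_x$ and $\tau_x$ are bijective. *)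

theory Defs
  imports "HOL-Algebra.Algebra"
begin

definition group_center :: "('a, 'b) monoid_scheme \<Rightarrow> 'a set" where
  "group_center G = {z \<in> carrier G. \<forall>x \<in> carrier G. z \<otimes>\<^bsub>G\<^esub> x = x \<otimes>\<^bsub>G\<^esub> z}"

definition comm :: "('a, 'b) monoid_scheme \<Rightarrow> 'a \<Rightarrow> 'a \<Rightarrow> 'a" where
  "comm G x y = x \<otimes>\<^bsub>G\<^esub> y \<otimes>\<^bsub>G\<^esub> inv\<^bsub>G\<^esub> x \<otimes>\<^bsub>G\<^esub> inv\<^bsub>G\<^esub> y"

definition comm_subgroup :: "('a, 'b) monoid_scheme \<Rightarrow> 'a set \<Rightarrow> 'a set \<Rightarrow> 'a set" where
  "comm_subgroup G A B = generate G {comm G a b | a b. a \<in> A \<and> b \<in> B}"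

definition endo_comm :: "('a, 'b) monoid_scheme \<Rightarrow> ('a \<Rightarrow> 'a) \<Rightarrow> 'a set" where
  "endo_comm G \<psi> = generate G {g \<otimes>\<^bsub>G\<^esub> inv\<^bsub>G\<^esub> (\<psi> g) | g. g \<in> carrier G}"

definition r12 :: "('a \<times> 'a \<Rightarrow> 'a \<times> 'a) \<Rightarrow> 'a \<times> 'a \<times> 'a \<Rightarrow> 'a \<times> 'a \<times> 'a" where
  "r12 r t = (case t of (x, y, z) \<Rightarrow> (fst (r (x, y)), snd (r (x, y)), z))"

definition r23 :: "('a \<times> 'a \<Rightarrow> 'a \<times> 'a) \<Rightarrow> 'a \<times> 'a \<times> 'a \<Rightarrow> 'a \<times> 'a \<times> 'a" where
  "r23 r t = (case t of (x, y, z) \<Rightarrow> (x, fst (r (y, z)), snd (r (y, z))))"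

definition is_YBE_solution :: "'a set \<Rightarrow> ('a \<times> 'a \<Rightarrow> 'a \<times> 'a) \<Rightarrow> bool" where
  "is_YBE_solution S r \<longleftrightarrow> S \<noteq> {} \<and> bij_betw r (Sigma S (\<lambda>_. S)) (Sigma S (\<lambda>_. S)) \<and>
     (\<forall>x\<in>S. \<forall>y\<in>S. \<forall>z\<in>S.
        r12 r (r23 r (r12 r (x, y, z))) = r23 r (r12 r (r23 r (x, y, z))))"

text \<open>sigma_x(y) = fst (r(x,y)), tau_y(x) = snd (r(x,y)).\<close>
definition nondegenerate :: "'a set \<Rightarrow> ('a \<times> 'a \<Rightarrow> 'a \<times> 'a) \<Rightarrow> bool" where
  "nondegenerate S r \<longleftrightarrow>
     (\<forall>x\<in>S. bij_betw (\<lambda>y. fst (r (x, y))) S S \<and> bij_betw (\<lambda>y. snd (r (y, x))) S S)"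

definition YBE_r1 :: "('a, 'b) monoid_scheme \<Rightarrow> ('a \<Rightarrow> 'a) \<Rightarrow> 'a \<times> 'a \<Rightarrow> 'a \<times> 'a" where
  "YBE_r1 G \<psi> p = (case p of (g, h) \<Rightarrow>
     (inv\<^bsub>G\<^esub> (\<psi> g) \<otimes>\<^bsub>G\<^esub> h \<otimes>\<^bsub>G\<^esub> \<psi> g,
      \<psi> (inv\<^bsub>G\<^esub> g \<otimes>\<^bsub>G\<^esub> h) \<otimes>\<^bsub>G\<^esub> inv\<^bsub>G\<^esub> h \<otimes>\<^bsub>G\<^esub> \<psi> g \<otimes>\<^bsub>G\<^esub> g
        \<otimes>\<^bsub>G\<^esub> inv\<^bsub>G\<^esub> (\<psi> g) \<otimes>\<^bsub>G\<^esub> h \<otimes>\<^bsub>G\<^esub> \<psi> (inv\<^bsub>G\<^esub> h \<otimes>\<^bsub>G\<^esub> g)))"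

definition YBE_r2 :: "('a, 'b) monoid_scheme \<Rightarrow> ('a \<Rightarrow> 'a) \<Rightarrow> 'a \<times> 'a \<Rightarrow> 'a \<times> 'a" where
  "YBE_r2 G \<psi> p = (case p of (g, h) \<Rightarrow>
     (g \<otimes>\<^bsub>G\<^esub> inv\<^bsub>G\<^esub> (\<psi> g) \<otimes>\<^bsub>G\<^esub> h \<otimes>\<^bsub>G\<^esub> \<psi> g \<otimes>\<^bsub>G\<^esub> inv\<^bsub>G\<^esub> g,
      \<psi> h \<otimes>\<^bsub>G\<^esub> g \<otimes>\<^bsub>G\<^esub> inv\<^bsub>G\<^esub> (\<psi> h)))"

definition YBE_r3 :: "('a, 'b) monoid_scheme \<Rightarrow> ('a \<Rightarrow> 'a) \<Rightarrow> 'a \<times> 'a \<Rightarrow> 'a \<times> 'a" where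
  "YBE_r3 G \<psi> p = (case p of (g, h) \<Rightarrow>
     (\<psi> g \<otimes>\<^bsub>G\<^esub> h \<otimes>\<^bsub>G\<^esub> inv\<^bsub>G\<^esub> (\<psi> g),
      \<psi> g \<otimes>\<^bsub>G\<^esub> inv\<^bsub>G\<^esub> h \<otimes>\<^bsub>G\<^esub> inv\<^bsub>G\<^esub> (\<psi> g) \<otimes>\<^bsub>G\<^esub> g \<otimes>\<^bsub>G\<^esub> h))"

definition YBE_r4 :: "('a, 'b) monoid_scheme \<Rightarrow> ('a \<Rightarrow> 'a) \<Rightarrow> 'a \<times> 'a \<Rightarrow> 'a \<times> 'a" where
  "YBE_r4 G \<psi> p = (case p of (g, h) \<Rightarrow>
     (g \<otimes>\<^bsub>G\<^esub> h \<otimes>\<^bsub>G\<^esub> inv\<^bsub>G\<^esub> (\<psi> h) \<otimes>\<^bsub>G\<^esub> inv\<^bsub>G\<^esub> g \<otimes>\<^bsub>G\<^esub> \<psi> h,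
      inv\<^bsub>G\<^esub> (\<psi> h) \<otimes>\<^bsub>G\<^esub> g \<otimes>\<^bsub>G\<^esub> \<psi> h))"

end

theory Submission
  imports Defs
begin


definition conjg :: "('a, 'b) monoid_scheme \<Rightarrow> 'a \<Rightarrow> 'a \<Rightarrow> 'a" where
  "conjg G t k = t \<otimes>\<^bsub>G\<^esub> k \<otimes>\<^bsub>G\<^esub> inv\<^bsub>G\<^esub> t"

definition zeq :: "('a, 'b) monoid_scheme \<Rightarrow> 'a \<Rightarrow> 'a \<Rightarrow> bool" where
  "zeq G x y \<longleftrightarrow> x \<in> carrier G \<and> y \<in> carrier G \<and> x \<otimes>\<^bsub>G\<^esub> inv\<^bsub>G\<^esub> y \<in> group_center G"

context group begin

lemma inv_cancel_l[simp]: "x \<in> carrier G \<Longrightarrow> y \<in> carrier G \<Longrightarrow> inv x \<otimes> (x \<otimes> y) = y"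
  by (simp add: m_assoc[symmetric])
lemma inv_cancel_r[simp]: "x \<in> carrier G \<Longrightarrow> y \<in> carrier G \<Longrightarrow> x \<otimes> (inv x \<otimes> y) = y"
  by (simp add: m_assoc[symmetric])

lemmas gsimps = m_assoc inv_mult_group

lemma center_carrier: "c \<in> group_center G \<Longrightarrow> c \<in> carrier G"
  by (simp add: group_center_def)
lemma center_comm: "c \<in> group_center G \<Longrightarrow> x \<in> carrier G \<Longrightarrow> c \<otimes> x = x \<otimes> c"
  by (simp add: group_center_def)
lemma center_one: "\<one> \<in> group_center G"
  by (simp add: group_center_def)
lemma center_mult: "c \<in> group_center G \<Longrightarrow> d \<in> group_center G \<Longrightarrow> c \<otimes> d \<in> group_center G"
proof -
  assume c: "c \<in> group_center G" and d: "d \<in> group_center G"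
  hence cc: "c \<in> carrier G" "d \<in> carrier G" by (auto simp: center_carrier)
  { fix x assume x: "x \<in> carrier G"
    have "c \<otimes> d \<otimes> x = c \<otimes> (d \<otimes> x)" using cc x by (simp add: m_assoc)
    also have "\<dots> = c \<otimes> (x \<otimes> d)" using center_comm[OF d x] by simp
    also have "\<dots> = (c \<otimes> x) \<otimes> d" using cc x by (simp add: m_assoc)
    also have "\<dots> = (x \<otimes> c) \<otimes> d" using center_comm[OF c x] by simp
    also have "\<dots> = x \<otimes> (c \<otimes> d)" using cc x by (simp add: m_assoc)
    finally have "c \<otimes> d \<otimes> x = x \<otimes> (c \<otimes> d)" . }
  thus ?thesis using cc by (simp add: group_center_def)
qed
lemma center_inv: "c \<in> group_center G \<Longrightarrow> inv c \<in> group_center G"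
proof -
  assume c: "c \<in> group_center G"
  hence cc: "c \<in> carrier G" by (rule center_carrier)
  { fix x assume x: "x \<in> carrier G"
    have "c \<otimes> x = x \<otimes> c" using c x by (rule center_comm)
    hence "inv c \<otimes> (c \<otimes> x) \<otimes> inv c = inv c \<otimes> (x \<otimes> c) \<otimes> inv c" by simp
    hence "inv c \<otimes> x = x \<otimes> inv c" using cc x by (simp add: m_assoc) }
  thus ?thesis using cc by (simp add: group_center_def)
qed

lemma conjg_closed[simp]: "t \<in> carrier G \<Longrightarrow> k \<in> carrier G \<Longrightarrow> conjg G t k \<in> carrier G"
  by (simp add: conjg_def)
lemma conjg_mult: "s \<in> carrier G \<Longrightarrow> t \<in> carrier G \<Longrightarrow> k \<in> carrier G \<Longrightarrow>
   conjg G (s \<otimes> t) k = conjg G s (conjg G t k)"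
  by (simp add: conjg_def gsimps)
lemma conjg_hom: "t \<in> carrier G \<Longrightarrow> x \<in> carrier G \<Longrightarrow> y \<in> carrier G \<Longrightarrow>
   conjg G t (x \<otimes> y) = conjg G t x \<otimes> conjg G t y"
  by (simp add: conjg_def gsimps)
lemma conjg_inv: "t \<in> carrier G \<Longrightarrow> x \<in> carrier G \<Longrightarrow> conjg G t (inv x) = inv (conjg G t x)"
  by (simp add: conjg_def gsimps)
lemma conjg_cancel[simp]: "t \<in> carrier G \<Longrightarrow> x \<in> carrier G \<Longrightarrow> conjg G (inv t) (conjg G t x) = x"
  by (simp add: conjg_def gsimps)
lemma conjg_cancel2[simp]: "t \<in> carrier G \<Longrightarrow> x \<in> carrier G \<Longrightarrow> conjg G t (conjg G (inv t) x) = x"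
  by (simp add: conjg_def gsimps)
lemma center_lcomm: "c \<in> group_center G \<Longrightarrow> x \<in> carrier G \<Longrightarrow> y \<in> carrier G \<Longrightarrow> x \<otimes> (c \<otimes> y) = c \<otimes> (x \<otimes> y)"
proof -
  assume a: "c \<in> group_center G" "x \<in> carrier G" "y \<in> carrier G"
  hence cc: "c \<in> carrier G" by (simp add: center_carrier)
  have "x \<otimes> (c \<otimes> y) = (x \<otimes> c) \<otimes> y" using a cc by (simp add: m_assoc)
  also have "\<dots> = (c \<otimes> x) \<otimes> y" using center_comm[OF a(1,2)] by simp
  finally show ?thesis using a cc by (simp add: m_assoc)
qed
lemma conjg_central: "c \<in> group_center G \<Longrightarrow> x \<in> carrier G \<Longrightarrow> conjg G c x = x"
proof -
  assume a: "c \<in> group_center G" "x \<in> carrier G"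
  hence cc: "c \<in> carrier G" by (simp add: center_carrier)
  have "conjg G c x = (c \<otimes> x) \<otimes> inv c" by (simp add: conjg_def)
  also have "\<dots> = (x \<otimes> c) \<otimes> inv c" using center_comm[OF a] by simp
  finally show ?thesis using a cc by (simp add: m_assoc)
qed
lemma conjg_of_central: "c \<in> group_center G \<Longrightarrow> x \<in> carrier G \<Longrightarrow> conjg G x c = c"
proof -
  assume a: "c \<in> group_center G" "x \<in> carrier G"
  hence cc: "c \<in> carrier G" by (simp add: center_carrier)
  have "conjg G x c = (x \<otimes> c) \<otimes> inv x" by (simp add: conjg_def)
  also have "\<dots> = (c \<otimes> x) \<otimes> inv x" using center_comm[OF a] by simp
  finally show ?thesis using a cc by (simp add: m_assoc)
qed
lemma conjg_bij: "t \<in> carrier G \<Longrightarrow> bij_betw (conjg G t) (carrier G) (carrier G)"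
  by (rule bij_betw_byWitness[where f'="conjg G (inv t)"]) auto

lemma zeq_refl: "x \<in> carrier G \<Longrightarrow> zeq G x x"
  by (simp add: zeq_def center_one)
lemma zeq_carrier: "zeq G x y \<Longrightarrow> x \<in> carrier G" "zeq G x y \<Longrightarrow> y \<in> carrier G"
  by (auto simp: zeq_def)
lemma zeq_sym: "zeq G x y \<Longrightarrow> zeq G y x"
proof -
  assume a: "zeq G x y"
  hence c: "x \<in> carrier G" "y \<in> carrier G" and cy: "x \<otimes> inv y \<in> group_center G" by (auto simp: zeq_def)
  have "inv (x \<otimes> inv y) \<in> group_center G" using center_inv[OF cy] .
  thus ?thesis using c by (simp add: zeq_def inv_mult_group)
qed
lemma zeq_trans: "zeq G x y \<Longrightarrow> zeq G y z \<Longrightarrow> zeq G x z"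
proof -
  assume a: "zeq G x y" "zeq G y z"
  hence c: "x \<in> carrier G" "y \<in> carrier G" "z \<in> carrier G" by (auto simp: zeq_def)
  have "(x \<otimes> inv y) \<otimes> (y \<otimes> inv z) \<in> group_center G" using a by (simp add: zeq_def center_mult)
  thus ?thesis using c by (simp add: zeq_def gsimps)
qed
lemma zeq_central: "zeq G x y \<Longrightarrow> x = (x \<otimes> inv y) \<otimes> y"
  by (simp add: zeq_def gsimps)
lemma zeq_mult: "zeq G x x' \<Longrightarrow> zeq G y y' \<Longrightarrow> zeq G (x \<otimes> y) (x' \<otimes> y')"
proof -
  assume a: "zeq G x x'" "zeq G y y'"
  hence c: "x \<in> carrier G" "y \<in> carrier G" "x' \<in> carrier G" "y' \<in> carrier G" by (auto simp: zeq_def)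
  have cy: "y \<otimes> inv y' \<in> group_center G" using a by (simp add: zeq_def)
  have "(x \<otimes> y) \<otimes> inv (x' \<otimes> y') = x \<otimes> (y \<otimes> inv y') \<otimes> inv x'" using c by (simp add: gsimps)
  also have "\<dots> = (y \<otimes> inv y') \<otimes> (x \<otimes> inv x')" using c center_lcomm[OF cy, of x "inv x'"] center_carrier[OF cy]
    by (simp add: m_assoc)
  finally show ?thesis using a c cy by (simp add: zeq_def center_mult)
qed
lemma zeq_inv: "zeq G x y \<Longrightarrow> zeq G (inv x) (inv y)"
proof -
  assume a: "zeq G x y"
  hence c: "x \<in> carrier G" "y \<in> carrier G" and cy: "x \<otimes> inv y \<in> group_center G" by (auto simp: zeq_def)
  have "inv x \<otimes> inv (inv y) = conjg G (inv x) (inv (x \<otimes> inv y))" using c by (simp add: conjg_def gsimps)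
  also have "\<dots> = inv (x \<otimes> inv y)" using conjg_of_central[OF center_inv[OF cy]] c by simp
  finally show ?thesis using c center_inv[OF cy] by (simp add: zeq_def)
qed
lemma zeq_conjg: "zeq G s t \<Longrightarrow> k \<in> carrier G \<Longrightarrow> conjg G s k = conjg G t k"
proof -
  assume a: "zeq G s t" and k: "k \<in> carrier G"
  hence c: "s \<in> carrier G" "t \<in> carrier G" and cy: "s \<otimes> inv t \<in> group_center G" by (auto simp: zeq_def)
  have "conjg G s k = conjg G ((s \<otimes> inv t) \<otimes> t) k" using c by (simp add: gsimps)
  also have "\<dots> = conjg G t k" using c k cy by (simp add: conjg_mult conjg_central)
  finally show ?thesis .
qed
lemma zeq_conjg2: "zeq G p q \<Longrightarrow> t \<in> carrier G \<Longrightarrow> zeq G (conjg G t p) (conjg G t q)"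
proof -
  assume a: "zeq G p q" and t: "t \<in> carrier G"
  hence c: "p \<in> carrier G" "q \<in> carrier G" and cy: "p \<otimes> inv q \<in> group_center G" by (auto simp: zeq_def)
  have "conjg G t p \<otimes> inv (conjg G t q) = conjg G t (p \<otimes> inv q)" using c t
    by (simp add: conjg_hom conjg_inv)
  also have "\<dots> = p \<otimes> inv q" using conjg_of_central[OF cy t] .
  finally show ?thesis using c t cy by (simp add: zeq_def)
qed
lemma zeq_centralI: "c \<in> group_center G \<Longrightarrow> x \<in> carrier G \<Longrightarrow> zeq G (c \<otimes> x) x"
  using center_carrier[of c] by (simp add: zeq_def gsimps)

end


lemma r12_closed: "(\<And>p. p \<in> S \<times> S \<Longrightarrow> q p \<in> S \<times> S) \<Longrightarrow> t \<in> S \<times> S \<times> S \<Longrightarrow> r12 q t \<in> S \<times> S \<times> S"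
  by (cases t) (auto simp: r12_def mem_Times_iff)
lemma r23_closed: "(\<And>p. p \<in> S \<times> S \<Longrightarrow> q p \<in> S \<times> S) \<Longrightarrow> t \<in> S \<times> S \<times> S \<Longrightarrow> r23 q t \<in> S \<times> S \<times> S"
  by (cases t) (auto simp: r23_def mem_Times_iff)
lemma r12_cancel: "(\<And>p. p \<in> S \<times> S \<Longrightarrow> q (q' p) = p) \<Longrightarrow> t \<in> S \<times> S \<times> S \<Longrightarrow> r12 q (r12 q' t) = t"
  by (cases t) (auto simp: r12_def)
lemma r23_cancel: "(\<And>p. p \<in> S \<times> S \<Longrightarrow> q (q' p) = p) \<Longrightarrow> t \<in> S \<times> S \<times> S \<Longrightarrow> r23 q (r23 q' t) = t"
  by (cases t) (auto simp: r23_def)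

lemma ybe_inverse:
  assumes Y: "is_YBE_solution S r"
    and cl: "\<And>p. p \<in> S \<times> S \<Longrightarrow> r' p \<in> S \<times> S"
    and i1: "\<And>p. p \<in> S \<times> S \<Longrightarrow> r (r' p) = p"
    and i2: "\<And>p. p \<in> S \<times> S \<Longrightarrow> r' (r p) = p"
  shows "is_YBE_solution S r'"
proof -
  have ne: "S \<noteq> {}" and bij: "bij_betw r (S \<times> S) (S \<times> S)"
    and yb: "\<And>x y z. x \<in> S \<Longrightarrow> y \<in> S \<Longrightarrow> z \<in> S \<Longrightarrow>
        r12 r (r23 r (r12 r (x, y, z))) = r23 r (r12 r (r23 r (x, y, z)))"
    using Y by (auto simp: is_YBE_solution_def)
  have rcl: "\<And>p. p \<in> S \<times> S \<Longrightarrow> r p \<in> S \<times> S" using bij by (auto dest: bij_betwE)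
  have im1: "r' ` (S \<times> S) \<subseteq> S \<times> S" using cl by blast
  have im2: "r ` (S \<times> S) \<subseteq> S \<times> S" using rcl by blast
  have bij': "bij_betw r' (S \<times> S) (S \<times> S)"
    by (rule bij_betw_byWitness[OF _ _ im1 im2]) (use i1 i2 in auto)
  have yb': "r12 r' (r23 r' (r12 r' (x, y, z))) = r23 r' (r12 r' (r23 r' (x, y, z)))"
    if xyz: "x \<in> S" "y \<in> S" "z \<in> S" for x y z
  proof -
    define t where "t = (x, y, z)"
    have tT: "t \<in> S \<times> S \<times> S" using xyz by (simp add: t_def)
    define s where "s = r23 r' (r12 r' (r23 r' t))"
    have sT: "s \<in> S \<times> S \<times> S" unfolding s_def
      by (intro r12_closed[OF cl] r23_closed[OF cl] tT)
    obtain s1 s2 s3 where s3: "s = (s1, s2, s3)" by (cases s) auto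
    have sS: "s1 \<in> S" "s2 \<in> S" "s3 \<in> S" using sT s3 by auto
    have e1: "r23 r (r12 r (r23 r s)) = t"
      unfolding s_def
      by (simp add: r23_cancel[where q=r and q'=r' and S=S, OF i1] r12_cancel[where q=r and q'=r' and S=S, OF i1] r12_closed[OF cl] r23_closed[OF cl] tT)
    have e2: "r12 r (r23 r (r12 r s)) = t" using yb[OF sS] e1 s3 by simp
    have "r12 r' (r23 r' (r12 r' t)) = s"
      unfolding e2[symmetric]
      by (simp add: r23_cancel[where q=r' and q'=r and S=S, OF i2] r12_cancel[where q=r' and q'=r and S=S, OF i2] r12_closed[OF rcl] r23_closed[OF rcl] sT)
    thus ?thesis by (simp add: s_def t_def)
  qed
  show ?thesis using ne bij' yb' by (simp add: is_YBE_solution_def)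
qed

lemma nondeg_inverse:
  assumes N: "nondegenerate S r"
    and rcl: "\<And>p. p \<in> S \<times> S \<Longrightarrow> r p \<in> S \<times> S"
    and cl: "\<And>p. p \<in> S \<times> S \<Longrightarrow> r' p \<in> S \<times> S"
    and i1: "\<And>p. p \<in> S \<times> S \<Longrightarrow> r (r' p) = p"
    and i2: "\<And>p. p \<in> S \<times> S \<Longrightarrow> r' (r p) = p"
  shows "nondegenerate S r'"
  unfolding nondegenerate_def
proof (intro ballI conjI)
  fix u assume u: "u \<in> S"
  show "bij_betw (\<lambda>v. fst (r' (u, v))) S S"
    unfolding bij_betw_def
  proof
    show "inj_on (\<lambda>v. fst (r' (u, v))) S"
    proof (rule inj_onI)
      fix v1 v2 assume v: "v1 \<in> S" "v2 \<in> S" and eq: "fst (r' (u, v1)) = fst (r' (u, v2))"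
      obtain g h1 where p1: "r' (u, v1) = (g, h1)" by (cases "r' (u, v1)")
      obtain g2 h2 where p2: "r' (u, v2) = (g2, h2)" by (cases "r' (u, v2)")
      have gg: "g2 = g" using eq p1 p2 by simp
      have m: "g \<in> S" "h1 \<in> S" "h2 \<in> S" using cl[of "(u,v1)"] cl[of "(u,v2)"] p1 p2 u v by auto
      have q1: "r (g, h1) = (u, v1)" using i1[of "(u,v1)"] p1 u v by simp
      have q2: "r (g, h2) = (u, v2)" using i1[of "(u,v2)"] p2 u v gg by simp
      have "bij_betw (\<lambda>y. fst (r (g, y))) S S" using N m by (simp add: nondegenerate_def)
      hence inj: "inj_on (\<lambda>y. fst (r (g, y))) S" by (simp add: bij_betw_def)
      have "fst (r (g, h1)) = fst (r (g, h2))" using q1 q2 by simp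
      hence "h1 = h2" using inj_onD[OF inj _ m(2,3)] by simp
      thus "v1 = v2" using q1 q2 by simp
    qed
    show "(\<lambda>v. fst (r' (u, v))) ` S = S"
    proof
      show "(\<lambda>v. fst (r' (u, v))) ` S \<subseteq> S"
      proof (rule image_subsetI)
        fix v assume "v \<in> S" thus "fst (r' (u, v)) \<in> S" using cl[of "(u,v)"] u by (simp add: mem_Times_iff)
      qed
      show "S \<subseteq> (\<lambda>v. fst (r' (u, v))) ` S"
      proof
        fix g assume g: "g \<in> S"
        have "bij_betw (\<lambda>y. fst (r (g, y))) S S" using N g by (simp add: nondegenerate_def)
        hence "u \<in> (\<lambda>y. fst (r (g, y))) ` S" using u by (simp add: bij_betw_def)
        then obtain h where h: "h \<in> S" "fst (r (g, h)) = u" by blast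
        define v where "v = snd (r (g, h))"
        have rv: "r (g, h) = (u, v)" using h by (simp add: v_def prod_eq_iff)
        have vS: "v \<in> S" using rcl[of "(g,h)"] g h by (auto simp: v_def mem_Times_iff)
        have "r' (u, v) = (g, h)" using i2[of "(g,h)"] rv g h by simp
        thus "g \<in> (\<lambda>v. fst (r' (u, v))) ` S" using vS by (intro image_eqI[where x=v]) simp_all
      qed
    qed
  qed
  show "bij_betw (\<lambda>v. snd (r' (v, u))) S S"
    unfolding bij_betw_def
  proof
    show "inj_on (\<lambda>v. snd (r' (v, u))) S"
    proof (rule inj_onI)
      fix v1 v2 assume v: "v1 \<in> S" "v2 \<in> S" and eq: "snd (r' (v1, u)) = snd (r' (v2, u))"
      obtain g1 h where p1: "r' (v1, u) = (g1, h)" by (cases "r' (v1, u)")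
      obtain g2 h2 where p2: "r' (v2, u) = (g2, h2)" by (cases "r' (v2, u)")
      have hh: "h2 = h" using eq p1 p2 by simp
      have m: "g1 \<in> S" "h \<in> S" "g2 \<in> S" using cl[of "(v1,u)"] cl[of "(v2,u)"] p1 p2 u v by auto
      have q1: "r (g1, h) = (v1, u)" using i1[of "(v1,u)"] p1 u v by simp
      have q2: "r (g2, h) = (v2, u)" using i1[of "(v2,u)"] p2 u v hh by simp
      have "bij_betw (\<lambda>y. snd (r (y, h))) S S" using N m by (simp add: nondegenerate_def)
      hence inj: "inj_on (\<lambda>y. snd (r (y, h))) S" by (simp add: bij_betw_def)
      have "snd (r (g1, h)) = snd (r (g2, h))" using q1 q2 by simp
      hence "g1 = g2" using inj_onD[OF inj _ m(1,3)] by simp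
      thus "v1 = v2" using q1 q2 by simp
    qed
    show "(\<lambda>v. snd (r' (v, u))) ` S = S"
    proof
      show "(\<lambda>v. snd (r' (v, u))) ` S \<subseteq> S"
      proof (rule image_subsetI)
        fix v assume "v \<in> S" thus "snd (r' (v, u)) \<in> S" using cl[of "(v,u)"] u by (simp add: mem_Times_iff)
      qed
      show "S \<subseteq> (\<lambda>v. snd (r' (v, u))) ` S"
      proof
        fix h assume h: "h \<in> S"
        have "bij_betw (\<lambda>y. snd (r (y, h))) S S" using N h by (simp add: nondegenerate_def)
        hence "u \<in> (\<lambda>y. snd (r (y, h))) ` S" using u by (simp add: bij_betw_def)
        then obtain g where g: "g \<in> S" "snd (r (g, h)) = u" by blast
        define v where "v = fst (r (g, h))"
        have rv: "r (g, h) = (v, u)" using g by (simp add: v_def prod_eq_iff)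
        have vS: "v \<in> S" using rcl[of "(g,h)"] g h by (auto simp: v_def mem_Times_iff)
        have "r' (v, u) = (g, h)" using i2[of "(g,h)"] rv g h by simp
        thus "h \<in> (\<lambda>v. snd (r' (v, u))) ` S" using vS by (intro image_eqI[where x=v]) simp_all
      qed
    qed
  qed
qed

lemma ybe_from_components:
  assumes req: "\<And>x y. x \<in> S \<Longrightarrow> y \<in> S \<Longrightarrow> r (x, y) = (\<sigma> x y, \<tau> y x)"
    and sc: "\<And>x y. x \<in> S \<Longrightarrow> y \<in> S \<Longrightarrow> \<sigma> x y \<in> S"
    and tc: "\<And>x y. x \<in> S \<Longrightarrow> y \<in> S \<Longrightarrow> \<tau> y x \<in> S"
    and c1: "\<And>x y z. x \<in> S \<Longrightarrow> y \<in> S \<Longrightarrow> z \<in> S \<Longrightarrow> \<sigma> (\<sigma> x y) (\<sigma> (\<tau> y x) z) = \<sigma> x (\<sigma> y z)"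
    and c2: "\<And>x y z. x \<in> S \<Longrightarrow> y \<in> S \<Longrightarrow> z \<in> S \<Longrightarrow> \<tau> (\<sigma> (\<tau> y x) z) (\<sigma> x y) = \<sigma> (\<tau> (\<sigma> y z) x) (\<tau> z y)"
    and c3: "\<And>x y z. x \<in> S \<Longrightarrow> y \<in> S \<Longrightarrow> z \<in> S \<Longrightarrow> \<tau> z (\<tau> y x) = \<tau> (\<tau> z y) (\<tau> (\<sigma> y z) x)"
    and xyz: "x \<in> S" "y \<in> S" "z \<in> S"
  shows "r12 r (r23 r (r12 r (x, y, z))) = r23 r (r12 r (r23 r (x, y, z)))"
proof -
  have L: "r12 r (r23 r (r12 r (x, y, z))) = (\<sigma> (\<sigma> x y) (\<sigma> (\<tau> y x) z), \<tau> (\<sigma> (\<tau> y x) z) (\<sigma> x y), \<tau> z (\<tau> y x))"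
    using xyz by (simp add: r12_def r23_def req sc tc)
  have R: "r23 r (r12 r (r23 r (x, y, z))) = (\<sigma> x (\<sigma> y z), \<sigma> (\<tau> (\<sigma> y z) x) (\<tau> z y), \<tau> (\<tau> z y) (\<tau> (\<sigma> y z) x))"
    using xyz by (simp add: r12_def r23_def req sc tc)
  show ?thesis unfolding L R using c1[OF xyz] c2[OF xyz] c3[OF xyz] by simp
qed



locale ybe_ctx = group G for G (structure) +
  fixes f :: "'a \<Rightarrow> 'a"
  assumes f_hom: "f \<in> hom G G"
    and f_cent: "\<And>a k. a \<in> endo_comm G f \<Longrightarrow> k \<in> carrier G \<Longrightarrow> f (comm G a k) \<in> group_center G"
begin

lemma f_closed[simp]: "x \<in> carrier G \<Longrightarrow> f x \<in> carrier G"
  using f_hom by (simp add: hom_in_carrier)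
lemma f_mult[simp]: "x \<in> carrier G \<Longrightarrow> y \<in> carrier G \<Longrightarrow> f (x \<otimes> y) = f x \<otimes> f y"
  using f_hom by (simp add: hom_mult)
lemma f_inv[simp]: "x \<in> carrier G \<Longrightarrow> f (inv x) = inv (f x)"
proof -
  interpret group_hom G G f using f_hom by (unfold_locales) simp
  show "x \<in> carrier G \<Longrightarrow> f (inv x) = inv (f x)" by simp
qed

abbreviation "E \<equiv> endo_comm G f"

lemma E_gens_sub: "{g \<otimes> inv (f g) | g. g \<in> carrier G} \<subseteq> carrier G" by auto
lemma E_sub: "a \<in> E \<Longrightarrow> a \<in> carrier G"
  using generate_incl[OF E_gens_sub] by (auto simp: endo_comm_def)
lemma E_gen: "x \<in> carrier G \<Longrightarrow> x \<otimes> inv (f x) \<in> E"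
  unfolding endo_comm_def by (rule generate.incl) blast
lemma E_mult: "a \<in> E \<Longrightarrow> b \<in> E \<Longrightarrow> a \<otimes> b \<in> E"
  unfolding endo_comm_def by (rule generate.eng)
lemma E_inv: "a \<in> E \<Longrightarrow> inv a \<in> E"
  unfolding endo_comm_def by (rule generate_m_inv_closed[OF E_gens_sub])
lemma E_gen2: "x \<in> carrier G \<Longrightarrow> inv (f x) \<otimes> x \<in> E"
proof -
  assume x: "x \<in> carrier G"
  have "inv (inv x \<otimes> inv (f (inv x))) \<in> E" by (rule E_inv[OF E_gen]) (simp add: x)
  thus ?thesis using x by (simp add: inv_mult_group)
qed
lemma E_gen3: "x \<in> carrier G \<Longrightarrow> inv x \<otimes> f x \<in> E"
proof -
  assume x: "x \<in> carrier G"
  have "inv x \<otimes> inv (f (inv x)) \<in> E" by (rule E_gen) (simp add: x)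
  thus ?thesis using x by simp
qed
lemma E_conj: "a \<in> E \<Longrightarrow> t \<in> carrier G \<Longrightarrow> conjg G t a \<in> E"
proof -
  assume a: "a \<in> E" and t: "t \<in> carrier G"
  from a show ?thesis unfolding endo_comm_def
  proof (induction rule: generate.induct)
    case one
    have "conjg G t \<one> = \<one>" using t by (simp add: conjg_def)
    thus ?case using generate.one by metis
  next
    case (incl h)
    then obtain g where g: "g \<in> carrier G" "h = g \<otimes> inv (f g)" by blast
    have "conjg G t h = ((t \<otimes> g) \<otimes> inv (f (t \<otimes> g))) \<otimes> inv (t \<otimes> inv (f t))"
      using g t by (simp add: conjg_def gsimps)
    moreover have "((t \<otimes> g) \<otimes> inv (f (t \<otimes> g))) \<otimes> inv (t \<otimes> inv (f t)) \<in> E"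
      by (rule E_mult[OF E_gen E_inv[OF E_gen]]) (simp_all add: g t)
    ultimately show ?case by (simp add: endo_comm_def)
  next
    case (inv h)
    then obtain g where g: "g \<in> carrier G" "h = g \<otimes> inv (f g)" by blast
    have "conjg G t (inv h) = inv (((t \<otimes> g) \<otimes> inv (f (t \<otimes> g))) \<otimes> inv (t \<otimes> inv (f t)))"
      using g t by (simp add: conjg_def gsimps)
    moreover have "inv (((t \<otimes> g) \<otimes> inv (f (t \<otimes> g))) \<otimes> inv (t \<otimes> inv (f t))) \<in> E"
      by (rule E_inv[OF E_mult[OF E_gen E_inv[OF E_gen]]]) (simp_all add: g t)
    ultimately show ?case by (simp add: endo_comm_def)
  next
    case (eng h1 h2)
    have c: "h1 \<in> carrier G" "h2 \<in> carrier G" using eng.hyps E_sub by (auto simp: endo_comm_def)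
    have "conjg G t (h1 \<otimes> h2) = conjg G t h1 \<otimes> conjg G t h2" using c t by (simp add: conjg_hom)
    thus ?case using generate.eng[OF eng.IH] by simp
  qed
qed

lemma KZ: "a \<in> E \<Longrightarrow> k \<in> carrier G \<Longrightarrow> zeq G (f (conjg G a k)) (f k)"
proof -
  assume a: "a \<in> E" and k: "k \<in> carrier G"
  have ac: "a \<in> carrier G" using E_sub a .
  have "f (comm G a k) = f (conjg G a k) \<otimes> inv (f k)" using ac k by (simp add: comm_def conjg_def gsimps)
  thus ?thesis using f_cent[OF a k] ac k by (simp add: zeq_def)
qed

lemma KZ2: "a \<in> E \<Longrightarrow> k \<in> carrier G \<Longrightarrow> zeq G (f (conjg G k a)) (f a)"
proof -
  assume a: "a \<in> E" and k: "k \<in> carrier G"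
  have ac: "a \<in> carrier G" using E_sub a .
  have "inv (f (comm G a k)) = f (conjg G k a) \<otimes> inv (f a)" using ac k by (simp add: comm_def conjg_def gsimps)
  thus ?thesis using center_inv[OF f_cent[OF a k]] ac k by (simp add: zeq_def)
qed

lemma FF: "z \<in> carrier G \<Longrightarrow> y \<in> carrier G \<Longrightarrow> zeq G (f (conjg G (f z) y)) (conjg G (f z) (f y))"
proof -
  assume z: "z \<in> carrier G" and y: "y \<in> carrier G"
  define e where "e = inv z \<otimes> f z"
  have e: "e \<in> E" "e \<in> carrier G" using E_gen3[OF z] z by (auto simp: e_def)
  have "f (conjg G (f z) y) = conjg G (f z) (f (conjg G e y))"
    using z y by (simp add: conjg_def e_def gsimps)
  moreover have "zeq G (conjg G (f z) (f (conjg G e y))) (conjg G (f z) (f y))"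
    using zeq_conjg2[OF KZ[OF e(1) y]] z by simp
  ultimately show ?thesis by simp
qed

lemma zeq_right_inv: "zeq G p q \<Longrightarrow> w \<in> carrier G \<Longrightarrow> zeq G (w \<otimes> inv p) (w \<otimes> inv q)"
  by (rule zeq_mult[OF zeq_refl zeq_inv])

end


context ybe_ctx begin

definition s3 :: "'a \<Rightarrow> 'a \<Rightarrow> 'a" where "s3 x k = conjg G (f x) k"
definition t3 :: "'a \<Rightarrow> 'a \<Rightarrow> 'a" where "t3 y x = inv (s3 x y) \<otimes> x \<otimes> y"

lemma s3_closed[simp]: "x \<in> carrier G \<Longrightarrow> k \<in> carrier G \<Longrightarrow> s3 x k \<in> carrier G"
  by (simp add: s3_def)
lemma t3_closed[simp]: "x \<in> carrier G \<Longrightarrow> y \<in> carrier G \<Longrightarrow> t3 y x \<in> carrier G"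
  by (simp add: t3_def)

lemma r3_eq: "g \<in> carrier G \<Longrightarrow> h \<in> carrier G \<Longrightarrow> YBE_r3 G f (g, h) = (s3 g h, t3 h g)"
  by (simp add: YBE_r3_def t3_def s3_def conjg_def gsimps)

lemma S_lemma: "x \<in> carrier G \<Longrightarrow> k \<in> carrier G \<Longrightarrow> zeq G (f (f x \<otimes> k \<otimes> inv (f x) \<otimes> x \<otimes> inv k)) (f x)"
proof -
  assume x: "x \<in> carrier G" and k: "k \<in> carrier G"
  define b where "b = inv (f x) \<otimes> x"
  have b: "b \<in> E" "b \<in> carrier G" using E_gen2[OF x] x by (auto simp: b_def)
  have e1: "f (f x \<otimes> k \<otimes> inv (f x) \<otimes> x \<otimes> inv k) = f (f x) \<otimes> f (conjg G k b)"
    using x k by (simp add: b_def conjg_def gsimps)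
  have e2: "f (f x) \<otimes> f b = f x" using x by (simp add: b_def gsimps)
  have "zeq G (f (f x) \<otimes> f (conjg G k b)) (f (f x) \<otimes> f b)"
    by (rule zeq_mult[OF zeq_refl KZ2[OF b(1) k]]) (simp add: x)
  thus ?thesis using e1 e2 by simp
qed

lemma s3_tau: "x \<in> carrier G \<Longrightarrow> y \<in> carrier G \<Longrightarrow> k \<in> carrier G \<Longrightarrow> s3 (t3 y x) k = s3 x k"
proof -
  assume x: "x \<in> carrier G" and y: "y \<in> carrier G" and k: "k \<in> carrier G"
  have "t3 y x = f x \<otimes> inv y \<otimes> inv (f x) \<otimes> x \<otimes> inv (inv y)"
    using x y by (simp add: t3_def s3_def conjg_def gsimps)
  hence "zeq G (f (t3 y x)) (f x)" using S_lemma[of x "inv y"] x y by simp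
  thus ?thesis using k by (simp add: s3_def zeq_conjg)
qed

lemma zeq_f_t3: "x \<in> carrier G \<Longrightarrow> y \<in> carrier G \<Longrightarrow> zeq G (f (t3 y x)) (f x)"
proof -
  assume x: "x \<in> carrier G" and y: "y \<in> carrier G"
  have "t3 y x = f x \<otimes> inv y \<otimes> inv (f x) \<otimes> x \<otimes> inv (inv y)"
    using x y by (simp add: t3_def s3_def conjg_def gsimps)
  thus "zeq G (f (t3 y x)) (f x)" using S_lemma[of x "inv y"] x y by simp
qed

lemma s3_comp: "a \<in> carrier G \<Longrightarrow> b \<in> carrier G \<Longrightarrow> k \<in> carrier G \<Longrightarrow> s3 a (s3 b k) = s3 (a \<otimes> b) k"
  by (simp add: s3_def conjg_mult)
lemma s3_mult: "x \<in> carrier G \<Longrightarrow> p \<in> carrier G \<Longrightarrow> q \<in> carrier G \<Longrightarrow> s3 x (p \<otimes> q) = s3 x p \<otimes> s3 x q"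
  by (simp add: s3_def conjg_hom)
lemma s3_inv: "x \<in> carrier G \<Longrightarrow> p \<in> carrier G \<Longrightarrow> s3 x (inv p) = inv (s3 x p)"
  by (simp add: s3_def conjg_inv)
lemma s3_P: "x \<in> carrier G \<Longrightarrow> y \<in> carrier G \<Longrightarrow> s3 x y \<otimes> t3 y x = x \<otimes> y"
  by (simp add: t3_def gsimps)

lemma s3_S2: "x \<in> carrier G \<Longrightarrow> y \<in> carrier G \<Longrightarrow> k \<in> carrier G \<Longrightarrow> s3 (s3 x y \<otimes> x) k = s3 (x \<otimes> y) k"
proof -
  assume x: "x \<in> carrier G" and y: "y \<in> carrier G" and k: "k \<in> carrier G"
  have "s3 (x \<otimes> y) k = s3 (s3 x y \<otimes> t3 y x) k" using s3_P[OF x y] by simp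
  also have "\<dots> = s3 (s3 x y) (s3 (t3 y x) k)" using x y k by (simp add: s3_comp)
  also have "\<dots> = s3 (s3 x y) (s3 x k)" using x y k by (simp add: s3_tau)
  also have "\<dots> = s3 (s3 x y \<otimes> x) k" using x y k by (simp add: s3_comp)
  finally show ?thesis by simp
qed

lemma c1_3': "x \<in> carrier G \<Longrightarrow> y \<in> carrier G \<Longrightarrow> z \<in> carrier G \<Longrightarrow> s3 (s3 x y) (s3 x z) = s3 x (s3 y z)"
  by (simp add: s3_comp s3_S2)

lemma c1_3: "x \<in> carrier G \<Longrightarrow> y \<in> carrier G \<Longrightarrow> z \<in> carrier G \<Longrightarrow> s3 (s3 x y) (s3 (t3 y x) z) = s3 x (s3 y z)"
  by (simp add: s3_tau c1_3')

lemma c2_3: "x \<in> carrier G \<Longrightarrow> y \<in> carrier G \<Longrightarrow> z \<in> carrier G \<Longrightarrow>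
   t3 (s3 (t3 y x) z) (s3 x y) = s3 (t3 (s3 y z) x) (t3 z y)"
proof -
  assume x: "x \<in> carrier G" and y: "y \<in> carrier G" and z: "z \<in> carrier G"
  have "t3 (s3 (t3 y x) z) (s3 x y) = inv (s3 (s3 x y) (s3 x z)) \<otimes> s3 x y \<otimes> s3 x z"
    using x y z by (simp add: s3_tau) (simp add: t3_def)
  also have "\<dots> = inv (s3 x (s3 y z)) \<otimes> s3 x y \<otimes> s3 x z" using x y z by (simp add: c1_3')
  also have "\<dots> = s3 x (t3 z y)" using x y z by (simp add: t3_def s3_mult s3_inv)
  also have "\<dots> = s3 (t3 (s3 y z) x) (t3 z y)" using x y z by (simp add: s3_tau)
  finally show ?thesis .
qed

lemma c3_3: "x \<in> carrier G \<Longrightarrow> y \<in> carrier G \<Longrightarrow> z \<in> carrier G \<Longrightarrow>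
   t3 z (t3 y x) = t3 (t3 z y) (t3 (s3 y z) x)"
proof -
  assume x: "x \<in> carrier G" and y: "y \<in> carrier G" and z: "z \<in> carrier G"
  have L: "t3 z (t3 y x) = inv (s3 x z) \<otimes> (inv (s3 x y) \<otimes> x \<otimes> y) \<otimes> z"
    using x y z by (simp add: s3_tau t3_def[of z "t3 y x"]) (simp add: t3_def)
  have sq: "s3 (t3 (s3 y z) x) (t3 z y) = inv (s3 x (s3 y z)) \<otimes> s3 x y \<otimes> s3 x z"
    using x y z by (simp add: s3_tau) (simp add: t3_def s3_mult s3_inv)
  have R: "t3 (t3 z y) (t3 (s3 y z) x) = inv (inv (s3 x (s3 y z)) \<otimes> s3 x y \<otimes> s3 x z) \<otimes>
      (inv (s3 x (s3 y z)) \<otimes> x \<otimes> s3 y z) \<otimes> (inv (s3 y z) \<otimes> y \<otimes> z)"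
    using x y z sq by (simp add: t3_def[of "t3 z y" "t3 (s3 y z) x"]) (simp add: t3_def)
  show ?thesis unfolding L R using x y z by (simp add: gsimps)
qed

lemma r4_eq: "g \<in> carrier G \<Longrightarrow> h \<in> carrier G \<Longrightarrow>
   YBE_r4 G f (g, h) = (g \<otimes> h \<otimes> inv (f h) \<otimes> inv g \<otimes> f h, conjg G (inv (f h)) g)"
  by (simp add: YBE_r4_def conjg_def)

lemma r3_r4: "g \<in> carrier G \<Longrightarrow> h \<in> carrier G \<Longrightarrow> YBE_r3 G f (YBE_r4 G f (g, h)) = (g, h)"
proof -
  assume g: "g \<in> carrier G" and h: "h \<in> carrier G"
  define u where "u = g \<otimes> h \<otimes> inv (f h) \<otimes> inv g \<otimes> f h"
  define v where "v = conjg G (inv (f h)) g"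
  have uv: "u \<in> carrier G" "v \<in> carrier G" using g h by (auto simp: u_def v_def)
  have ue: "f u = f (conjg G g (h \<otimes> inv (f h))) \<otimes> f (f h)" using g h by (simp add: u_def conjg_def gsimps)
  have "zeq G (f (conjg G g (h \<otimes> inv (f h))) \<otimes> f (f h)) (f (h \<otimes> inv (f h)) \<otimes> f (f h))"
    by (rule zeq_mult[OF KZ2[OF E_gen[OF h] g] zeq_refl]) (simp add: h)
  hence zu: "zeq G (f u) (f h)" using ue h by (simp add: gsimps)
  have s: "s3 u v = g" using zeq_conjg[OF zu uv(2)] g h by (simp add: s3_def v_def)
  have "YBE_r3 G f (YBE_r4 G f (g, h)) = (s3 u v, t3 v u)" using g h uv by (simp add: r4_eq r3_eq u_def v_def)
  also have "\<dots> = (g, h)" using s g h by (simp add: t3_def u_def v_def conjg_def gsimps)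
  finally show ?thesis .
qed

lemma r4_r3: "g \<in> carrier G \<Longrightarrow> h \<in> carrier G \<Longrightarrow> YBE_r4 G f (YBE_r3 G f (g, h)) = (g, h)"
proof -
  assume g: "g \<in> carrier G" and h: "h \<in> carrier G"
  define u where "u = s3 g h"
  define v where "v = t3 h g"
  have uv: "u \<in> carrier G" "v \<in> carrier G" using g h by (auto simp: u_def v_def)
  have zv: "zeq G (inv (f v)) (inv (f g))" using zeq_inv[OF zeq_f_t3[OF g h]] by (simp add: v_def)
  have c: "conjg G (inv (f v)) u = h" using zeq_conjg[OF zv uv(1)] g h by (simp add: u_def s3_def)
  have e: "u \<otimes> v \<otimes> inv (f v) \<otimes> inv u \<otimes> f v = (u \<otimes> v) \<otimes> inv (conjg G (inv (f v)) u)"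
    using uv by (simp add: conjg_def gsimps)
  have p: "u \<otimes> v = g \<otimes> h" using s3_P[OF g h] by (simp add: u_def v_def)
  have e2: "u \<otimes> v \<otimes> inv (f v) \<otimes> inv u \<otimes> f v = (u \<otimes> v) \<otimes> inv h" using e c by simp
  have e3: "(u \<otimes> v) \<otimes> inv h = g" using p g h by (simp add: gsimps)
  have "YBE_r4 G f (YBE_r3 G f (g, h)) = (u \<otimes> v \<otimes> inv (f v) \<otimes> inv u \<otimes> f v, conjg G (inv (f v)) u)"
    using g h uv by (simp add: r4_eq r3_eq u_def v_def)
  thus ?thesis using e2 e3 c by simp
qed

lemma r3_closed: "p \<in> carrier G \<times> carrier G \<Longrightarrow> YBE_r3 G f p \<in> carrier G \<times> carrier G"
  by (cases p) (simp add: r3_eq)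
lemma r4_closed: "p \<in> carrier G \<times> carrier G \<Longrightarrow> YBE_r4 G f p \<in> carrier G \<times> carrier G"
  by (cases p) (simp add: r4_eq)

lemma r3_ybe: "is_YBE_solution (carrier G) (YBE_r3 G f)"
proof -
  have ne: "carrier G \<noteq> {}" by auto
  have im1: "YBE_r3 G f ` (carrier G \<times> carrier G) \<subseteq> carrier G \<times> carrier G" using r3_closed by blast
  have im2: "YBE_r4 G f ` (carrier G \<times> carrier G) \<subseteq> carrier G \<times> carrier G" using r4_closed by blast
  have bij: "bij_betw (YBE_r3 G f) (carrier G \<times> carrier G) (carrier G \<times> carrier G)"
    by (rule bij_betw_byWitness[OF _ _ im1 im2]) (auto simp: r3_r4 r4_r3)
  have yb: "\<forall>x\<in>carrier G. \<forall>y\<in>carrier G. \<forall>z\<in>carrier G.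
      r12 (YBE_r3 G f) (r23 (YBE_r3 G f) (r12 (YBE_r3 G f) (x, y, z))) =
      r23 (YBE_r3 G f) (r12 (YBE_r3 G f) (r23 (YBE_r3 G f) (x, y, z)))"
  proof (intro ballI)
    fix x y z assume xyz: "x \<in> carrier G" "y \<in> carrier G" "z \<in> carrier G"
    show "r12 (YBE_r3 G f) (r23 (YBE_r3 G f) (r12 (YBE_r3 G f) (x, y, z))) =
      r23 (YBE_r3 G f) (r12 (YBE_r3 G f) (r23 (YBE_r3 G f) (x, y, z)))"
      by (rule ybe_from_components[where \<sigma>=s3 and \<tau>=t3, OF r3_eq _ _ c1_3 c2_3 c3_3 xyz]) simp_all
  qed
  show ?thesis using ne bij yb by (simp add: is_YBE_solution_def)
qed

lemma r3_nondeg: "nondegenerate (carrier G) (YBE_r3 G f)"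
  unfolding nondegenerate_def
proof (intro ballI conjI)
  fix x assume x: "x \<in> carrier G"
  have "bij_betw (\<lambda>y. fst (YBE_r3 G f (x, y))) (carrier G) (carrier G) = bij_betw (conjg G (f x)) (carrier G) (carrier G)"
    by (rule bij_betw_cong) (simp add: r3_eq x s3_def)
  thus "bij_betw (\<lambda>y. fst (YBE_r3 G f (x, y))) (carrier G) (carrier G)" using conjg_bij[of "f x"] x by simp
  have eq: "bij_betw (\<lambda>y. snd (YBE_r3 G f (y, x))) (carrier G) (carrier G) = bij_betw (t3 x) (carrier G) (carrier G)"
    by (rule bij_betw_cong) (simp add: r3_eq x)
  have "bij_betw (t3 x) (carrier G) (carrier G)"
  proof (rule bij_betw_byWitness[where f'="\<lambda>t. s3 t x \<otimes> t \<otimes> inv x"])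
    show "\<forall>g\<in>carrier G. s3 (t3 x g) x \<otimes> t3 x g \<otimes> inv x = g"
      using x by (simp add: s3_tau) (simp add: t3_def gsimps)
    show "\<forall>t\<in>carrier G. t3 x (s3 t x \<otimes> t \<otimes> inv x) = t"
    proof
      fix t assume t: "t \<in> carrier G"
      have "s3 t x \<otimes> t \<otimes> inv x = f t \<otimes> x \<otimes> inv (f t) \<otimes> t \<otimes> inv x" using t x by (simp add: s3_def conjg_def)
      hence "zeq G (f (s3 t x \<otimes> t \<otimes> inv x)) (f t)" using S_lemma[OF t x] by simp
      hence "s3 (s3 t x \<otimes> t \<otimes> inv x) x = s3 t x" using x by (simp add: s3_def zeq_conjg)
      thus "t3 x (s3 t x \<otimes> t \<otimes> inv x) = t" using x t by (simp add: t3_def gsimps)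
    qed
    show "t3 x ` carrier G \<subseteq> carrier G" using x by auto
    show "(\<lambda>t. s3 t x \<otimes> t \<otimes> inv x) ` carrier G \<subseteq> carrier G" using x by auto
  qed
  thus "bij_betw (\<lambda>y. snd (YBE_r3 G f (y, x))) (carrier G) (carrier G)" using eq by simp
qed

end


context ybe_ctx begin

definition a2 :: "'a \<Rightarrow> 'a" where "a2 x = x \<otimes> inv (f x)"
definition s2 :: "'a \<Rightarrow> 'a \<Rightarrow> 'a" where "s2 x k = conjg G (a2 x) k"
definition t2 :: "'a \<Rightarrow> 'a \<Rightarrow> 'a" where "t2 y x = conjg G (f y) x"

lemma a2_closed[simp]: "x \<in> carrier G \<Longrightarrow> a2 x \<in> carrier G" by (simp add: a2_def)
lemma s2_closed[simp]: "x \<in> carrier G \<Longrightarrow> k \<in> carrier G \<Longrightarrow> s2 x k \<in> carrier G" by (simp add: s2_def)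
lemma t2_closed[simp]: "x \<in> carrier G \<Longrightarrow> y \<in> carrier G \<Longrightarrow> t2 y x \<in> carrier G" by (simp add: t2_def)

lemma r2_eq: "g \<in> carrier G \<Longrightarrow> h \<in> carrier G \<Longrightarrow> YBE_r2 G f (g, h) = (s2 g h, t2 h g)"
  by (simp add: YBE_r2_def s2_def t2_def a2_def conjg_def gsimps)

lemma T1: "x \<in> carrier G \<Longrightarrow> y \<in> carrier G \<Longrightarrow> zeq G (f (s2 x y)) (f y)"
  unfolding s2_def a2_def by (rule KZ[OF E_gen])

lemma t2_T1: "x \<in> carrier G \<Longrightarrow> y \<in> carrier G \<Longrightarrow> k \<in> carrier G \<Longrightarrow> t2 (s2 x y) k = t2 y k"
  unfolding t2_def by (rule zeq_conjg[OF T1])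

lemma FFa: "z \<in> carrier G \<Longrightarrow> y \<in> carrier G \<Longrightarrow> zeq G (f (t2 z y)) (conjg G (f z) (f y))"
  unfolding t2_def by (rule FF)

lemma E3: "y \<in> carrier G \<Longrightarrow> z \<in> carrier G \<Longrightarrow> zeq G (f (t2 z y) \<otimes> f z) (f z \<otimes> f y)"
proof -
  assume y: "y \<in> carrier G" and z: "z \<in> carrier G"
  have "zeq G (f (t2 z y) \<otimes> f z) (conjg G (f z) (f y) \<otimes> f z)"
    by (rule zeq_mult[OF FFa[OF z y] zeq_refl]) (simp add: z)
  thus ?thesis using y z by (simp add: conjg_def gsimps)
qed

lemma a2_t2: "x \<in> carrier G \<Longrightarrow> z \<in> carrier G \<Longrightarrow> zeq G (a2 (t2 z x)) (conjg G (f z) (a2 x))"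
proof -
  assume x: "x \<in> carrier G" and z: "z \<in> carrier G"
  have "zeq G (t2 z x \<otimes> inv (f (t2 z x))) (t2 z x \<otimes> inv (conjg G (f z) (f x)))"
    by (rule zeq_right_inv[OF FFa[OF z x]]) (simp add: x z)
  moreover have "t2 z x \<otimes> inv (conjg G (f z) (f x)) = conjg G (f z) (a2 x)"
    using x z by (simp add: t2_def a2_def conjg_def gsimps)
  ultimately show ?thesis by (simp add: a2_def)
qed

lemma E2: "x \<in> carrier G \<Longrightarrow> z \<in> carrier G \<Longrightarrow> zeq G (a2 (t2 z x) \<otimes> f z) (f z \<otimes> a2 x)"
proof -
  assume x: "x \<in> carrier G" and z: "z \<in> carrier G"
  have "zeq G (a2 (t2 z x) \<otimes> f z) (conjg G (f z) (a2 x) \<otimes> f z)"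
    by (rule zeq_mult[OF a2_t2[OF x z] zeq_refl]) (simp add: z)
  thus ?thesis using x z by (simp add: conjg_def gsimps)
qed

lemma E1: "x \<in> carrier G \<Longrightarrow> y \<in> carrier G \<Longrightarrow> zeq G (a2 (s2 x y) \<otimes> a2 (t2 y x)) (a2 x \<otimes> a2 y)"
proof -
  assume x: "x \<in> carrier G" and y: "y \<in> carrier G"
  have z1: "zeq G (a2 (s2 x y)) (s2 x y \<otimes> inv (f y))"
    unfolding a2_def[of "s2 x y"] by (rule zeq_right_inv[OF T1[OF x y]]) (simp add: x y)
  have "zeq G (a2 (s2 x y) \<otimes> a2 (t2 y x)) ((s2 x y \<otimes> inv (f y)) \<otimes> conjg G (f y) (a2 x))"
    by (rule zeq_mult[OF z1 a2_t2[OF x y]])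
  moreover have "(s2 x y \<otimes> inv (f y)) \<otimes> conjg G (f y) (a2 x) = a2 x \<otimes> a2 y"
    using x y by (simp add: s2_def a2_def conjg_def gsimps)
  ultimately show ?thesis by simp
qed

lemma c1_2: "x \<in> carrier G \<Longrightarrow> y \<in> carrier G \<Longrightarrow> z \<in> carrier G \<Longrightarrow> s2 (s2 x y) (s2 (t2 y x) z) = s2 x (s2 y z)"
proof -
  assume x: "x \<in> carrier G" and y: "y \<in> carrier G" and z: "z \<in> carrier G"
  have "s2 (s2 x y) (s2 (t2 y x) z) = conjg G (a2 (s2 x y) \<otimes> a2 (t2 y x)) z"
    using x y z by (simp add: s2_def conjg_mult)
  also have "\<dots> = conjg G (a2 x \<otimes> a2 y) z" by (rule zeq_conjg[OF E1[OF x y] z])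
  also have "\<dots> = s2 x (s2 y z)" using x y z by (simp add: s2_def conjg_mult)
  finally show ?thesis .
qed

lemma c2_2: "x \<in> carrier G \<Longrightarrow> y \<in> carrier G \<Longrightarrow> z \<in> carrier G \<Longrightarrow>
   t2 (s2 (t2 y x) z) (s2 x y) = s2 (t2 (s2 y z) x) (t2 z y)"
proof -
  assume x: "x \<in> carrier G" and y: "y \<in> carrier G" and z: "z \<in> carrier G"
  have "t2 (s2 (t2 y x) z) (s2 x y) = t2 z (s2 x y)" using x y z by (simp add: t2_T1)
  also have "\<dots> = conjg G (f z \<otimes> a2 x) y" using x y z by (simp add: t2_def s2_def conjg_mult)
  also have "\<dots> = conjg G (a2 (t2 z x) \<otimes> f z) y" by (rule zeq_conjg[OF zeq_sym[OF E2[OF x z]] y])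
  also have "\<dots> = s2 (t2 z x) (t2 z y)" using x y z by (simp add: t2_def s2_def conjg_mult)
  also have "\<dots> = s2 (t2 (s2 y z) x) (t2 z y)" using x y z by (simp add: t2_T1)
  finally show ?thesis .
qed

lemma c3_2: "x \<in> carrier G \<Longrightarrow> y \<in> carrier G \<Longrightarrow> z \<in> carrier G \<Longrightarrow>
   t2 z (t2 y x) = t2 (t2 z y) (t2 (s2 y z) x)"
proof -
  assume x: "x \<in> carrier G" and y: "y \<in> carrier G" and z: "z \<in> carrier G"
  have "t2 z (t2 y x) = conjg G (f z \<otimes> f y) x" using x y z by (simp add: t2_def conjg_mult)
  also have "\<dots> = conjg G (f (t2 z y) \<otimes> f z) x" by (rule zeq_conjg[OF zeq_sym[OF E3[OF y z]] x])
  also have "\<dots> = t2 (t2 z y) (t2 z x)" using x y z by (simp add: t2_def[of z x] t2_def[of "t2 z y"] conjg_mult)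
  also have "\<dots> = t2 (t2 z y) (t2 (s2 y z) x)" using x y z by (simp add: t2_T1)
  finally show ?thesis .
qed

definition W :: "'a \<Rightarrow> 'a \<Rightarrow> 'a" where "W g h = inv (f g) \<otimes> f h \<otimes> inv h \<otimes> f g"

lemma W_closed[simp]: "g \<in> carrier G \<Longrightarrow> h \<in> carrier G \<Longrightarrow> W g h \<in> carrier G" by (simp add: W_def)

lemma r1_eq: "g \<in> carrier G \<Longrightarrow> h \<in> carrier G \<Longrightarrow> YBE_r1 G f (g, h) = (conjg G (inv (f g)) h, conjg G (W g h) g)"
  by (simp add: YBE_r1_def W_def conjg_def gsimps)

lemma r1_r2: "g \<in> carrier G \<Longrightarrow> h \<in> carrier G \<Longrightarrow> YBE_r1 G f (YBE_r2 G f (g, h)) = (g, h)"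
proof -
  assume g: "g \<in> carrier G" and h: "h \<in> carrier G"
  define u where "u = s2 g h"
  define v where "v = t2 h g"
  have uv: "u \<in> carrier G" "v \<in> carrier G" using g h by (auto simp: u_def v_def)
  have zu: "zeq G (inv (f u)) (inv (f h))" using zeq_inv[OF T1[OF g h]] by (simp add: u_def)
  have first: "conjg G (inv (f u)) v = g"
    using zeq_conjg[OF zu uv(2)] g h by (simp add: v_def t2_def)
  have We: "W u v = conjg G (inv (f u)) (f v \<otimes> inv v)" using uv by (simp add: W_def conjg_def gsimps)
  have We2: "conjg G (inv (f u)) (f v \<otimes> inv v) = conjg G (inv (f h)) (f v \<otimes> inv v)"
    using zeq_conjg[OF zu] uv by simp
  have z1: "zeq G (f v \<otimes> inv v) (conjg G (f h) (f g) \<otimes> inv v)"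
    by (rule zeq_mult[OF _ zeq_refl]) (simp_all add: v_def FFa g h)
  have e1: "conjg G (f h) (f g) \<otimes> inv v = conjg G (f h) (inv (a2 g))"
    using g h by (simp add: v_def t2_def a2_def conjg_def gsimps)
  have z2: "zeq G (conjg G (inv (f h)) (f v \<otimes> inv v)) (inv (a2 g))"
    using zeq_conjg2[OF z1, of "inv (f h)"] e1 g h by simp
  have zW: "zeq G (W u v) (inv (a2 g))" using z2 We We2 by simp
  have second: "conjg G (W u v) u = h"
    using zeq_conjg[OF zW uv(1)] g h by (simp add: u_def s2_def)
  show ?thesis using first second g h uv by (simp add: r2_eq r1_eq u_def v_def)
qed

lemma r2_r1: "g \<in> carrier G \<Longrightarrow> h \<in> carrier G \<Longrightarrow> YBE_r2 G f (YBE_r1 G f (g, h)) = (g, h)"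
proof -
  assume g: "g \<in> carrier G" and h: "h \<in> carrier G"
  define u where "u = conjg G (inv (f g)) h"
  define v where "v = conjg G (W g h) g"
  have uv: "u \<in> carrier G" "v \<in> carrier G" using g h by (auto simp: u_def v_def)
  have WE: "W g h \<in> E"
  proof -
    have "W g h = conjg G (inv (f g)) (inv (h \<otimes> inv (f h)))" using g h by (simp add: W_def conjg_def gsimps)
    moreover have "conjg G (inv (f g)) (inv (h \<otimes> inv (f h))) \<in> E"
      by (rule E_conj[OF E_inv[OF E_gen]]) (simp_all add: g h)
    ultimately show ?thesis by simp
  qed
  have zv: "zeq G (f v) (f g)" unfolding v_def by (rule KZ[OF WE g])
  have second: "t2 v u = h" using zeq_conjg[OF zv uv(1)] g h by (simp add: t2_def u_def)
  have ce: "a2 u \<otimes> W g h = conjg G (inv (f g) \<otimes> h) (f (comm G (a2 g) (inv h)))"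
    using g h by (simp add: u_def a2_def W_def conjg_def comm_def gsimps)
  have cc: "f (comm G (a2 g) (inv h)) \<in> group_center G"
    unfolding a2_def by (rule f_cent[OF E_gen[OF g]]) (simp add: h)
  have cz: "a2 u \<otimes> W g h \<in> group_center G"
    unfolding ce using conjg_of_central[OF cc, of "inv (f g) \<otimes> h"] cc g h by simp
  have first: "s2 u v = g"
    using uv g h by (simp add: s2_def v_def conjg_mult[symmetric] conjg_central[OF cz])
  show ?thesis using first second g h uv by (simp add: r2_eq r1_eq u_def v_def)
qed

lemma r1_closed: "p \<in> carrier G \<times> carrier G \<Longrightarrow> YBE_r1 G f p \<in> carrier G \<times> carrier G"
  by (cases p) (simp add: r1_eq)
lemma r2_closed: "p \<in> carrier G \<times> carrier G \<Longrightarrow> YBE_r2 G f p \<in> carrier G \<times> carrier G"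
  by (cases p) (simp add: r2_eq)

lemma r2_ybe: "is_YBE_solution (carrier G) (YBE_r2 G f)"
proof -
  have ne: "carrier G \<noteq> {}" by auto
  have im1: "YBE_r2 G f ` (carrier G \<times> carrier G) \<subseteq> carrier G \<times> carrier G" using r2_closed by blast
  have im2: "YBE_r1 G f ` (carrier G \<times> carrier G) \<subseteq> carrier G \<times> carrier G" using r1_closed by blast
  have bij: "bij_betw (YBE_r2 G f) (carrier G \<times> carrier G) (carrier G \<times> carrier G)"
    by (rule bij_betw_byWitness[OF _ _ im1 im2]) (auto simp: r1_r2 r2_r1)
  have yb: "\<forall>x\<in>carrier G. \<forall>y\<in>carrier G. \<forall>z\<in>carrier G.
      r12 (YBE_r2 G f) (r23 (YBE_r2 G f) (r12 (YBE_r2 G f) (x, y, z))) =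
      r23 (YBE_r2 G f) (r12 (YBE_r2 G f) (r23 (YBE_r2 G f) (x, y, z)))"
  proof (intro ballI)
    fix x y z assume xyz: "x \<in> carrier G" "y \<in> carrier G" "z \<in> carrier G"
    show "r12 (YBE_r2 G f) (r23 (YBE_r2 G f) (r12 (YBE_r2 G f) (x, y, z))) =
      r23 (YBE_r2 G f) (r12 (YBE_r2 G f) (r23 (YBE_r2 G f) (x, y, z)))"
      by (rule ybe_from_components[where \<sigma>=s2 and \<tau>=t2, OF r2_eq _ _ c1_2 c2_2 c3_2 xyz]) simp_all
  qed
  show ?thesis using ne bij yb by (simp add: is_YBE_solution_def)
qed

lemma r2_nondeg: "nondegenerate (carrier G) (YBE_r2 G f)"
  unfolding nondegenerate_def
proof (intro ballI conjI)
  fix x assume x: "x \<in> carrier G"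
  have "bij_betw (\<lambda>y. fst (YBE_r2 G f (x, y))) (carrier G) (carrier G) = bij_betw (conjg G (a2 x)) (carrier G) (carrier G)"
    by (rule bij_betw_cong) (simp add: r2_eq x s2_def)
  thus "bij_betw (\<lambda>y. fst (YBE_r2 G f (x, y))) (carrier G) (carrier G)" using conjg_bij[of "a2 x"] x by simp
  have "bij_betw (\<lambda>y. snd (YBE_r2 G f (y, x))) (carrier G) (carrier G) = bij_betw (conjg G (f x)) (carrier G) (carrier G)"
    by (rule bij_betw_cong) (simp add: r2_eq x t2_def)
  thus "bij_betw (\<lambda>y. snd (YBE_r2 G f (y, x))) (carrier G) (carrier G)" using conjg_bij[of "f x"] x by simp
qed

lemma r1_ybe: "is_YBE_solution (carrier G) (YBE_r1 G f)"
  by (rule ybe_inverse[OF r2_ybe r1_closed]) (auto simp: r1_r2 r2_r1)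
lemma r1_nondeg: "nondegenerate (carrier G) (YBE_r1 G f)"
  by (rule nondeg_inverse[OF r2_nondeg r2_closed r1_closed]) (auto simp: r1_r2 r2_r1)
lemma r4_ybe: "is_YBE_solution (carrier G) (YBE_r4 G f)"
  by (rule ybe_inverse[OF r3_ybe r4_closed]) (auto simp: r3_r4 r4_r3)
lemma r4_nondeg: "nondegenerate (carrier G) (YBE_r4 G f)"
  by (rule nondeg_inverse[OF r3_nondeg r3_closed r4_closed]) (auto simp: r3_r4 r4_r3)

lemma r12_iff: "(\<forall>p \<in> carrier G \<times> carrier G. YBE_r1 G f p = YBE_r2 G f p) \<longleftrightarrow> comm_group G"
proof
  assume H: "\<forall>p \<in> carrier G \<times> carrier G. YBE_r1 G f p = YBE_r2 G f p"
  show "comm_group G"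
  proof (rule group_comm_groupI)
    fix x g assume x: "x \<in> carrier G" and g: "g \<in> carrier G"
    define h where "h = conjg G (f g) x"
    have hc: "h \<in> carrier G" using x g by (simp add: h_def)
    have "YBE_r1 G f (g, h) = YBE_r2 G f (g, h)" using H g hc by simp
    hence "conjg G (inv (f g)) h = s2 g h" using g hc by (simp add: r1_eq r2_eq)
    hence "x = conjg G (a2 g \<otimes> f g) x" using x g by (simp add: h_def s2_def conjg_mult)
    hence "x = g \<otimes> x \<otimes> inv g" using x g by (simp add: a2_def conjg_def gsimps)
    hence "x \<otimes> g = (g \<otimes> x \<otimes> inv g) \<otimes> g" by simp
    thus "x \<otimes> g = g \<otimes> x" using x g by (simp add: gsimps)
  qed
next
  assume C: "comm_group G"
  have cj: "\<And>t k. t \<in> carrier G \<Longrightarrow> k \<in> carrier G \<Longrightarrow> conjg G t k = k"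
  proof -
    fix t k assume t: "t \<in> carrier G" and k: "k \<in> carrier G"
    interpret C: comm_group G by (rule C)
    have "t \<otimes> k = k \<otimes> t" using t k by (rule C.m_comm)
    thus "conjg G t k = k" using t k by (simp add: conjg_def m_assoc)
  qed
  show "\<forall>p \<in> carrier G \<times> carrier G. YBE_r1 G f p = YBE_r2 G f p"
    by (auto simp: r1_eq r2_eq s2_def t2_def cj)
qed

lemma r34_pt: "g \<in> carrier G \<Longrightarrow> h \<in> carrier G \<Longrightarrow> YBE_r3 G f (g, h) = YBE_r4 G f (g, h) \<longleftrightarrow>
   inv g \<otimes> inv (f (inv g)) \<otimes> h \<otimes> f (inv g) = h \<otimes> inv (f h) \<otimes> inv g \<otimes> f h"
proof -
  assume g: "g \<in> carrier G" and h: "h \<in> carrier G"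
  define A where "A = f g \<otimes> h \<otimes> inv (f g)"
  define B where "B = g \<otimes> h \<otimes> inv (f h) \<otimes> inv g \<otimes> f h"
  have AB: "A \<in> carrier G" "B \<in> carrier G" using g h by (auto simp: A_def B_def)
  have r3: "YBE_r3 G f (g, h) = (A, inv A \<otimes> g \<otimes> h)" using g h by (simp add: YBE_r3_def A_def gsimps)
  have r4: "YBE_r4 G f (g, h) = (B, inv B \<otimes> g \<otimes> h)" using g h by (simp add: YBE_r4_def B_def gsimps)
  have "YBE_r3 G f (g, h) = YBE_r4 G f (g, h) \<longleftrightarrow> A = B" unfolding r3 r4 prod.inject by (rule iffI) simp_all
  also have "\<dots> \<longleftrightarrow> inv g \<otimes> A = inv g \<otimes> B" using l_cancel[of "inv g" A B] AB g by simp
  also have "\<dots> \<longleftrightarrow> inv g \<otimes> inv (f (inv g)) \<otimes> h \<otimes> f (inv g) = h \<otimes> inv (f h) \<otimes> inv g \<otimes> f h"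
    using g h by (simp add: A_def B_def gsimps)
  finally show ?thesis .
qed

lemma r34_iff: "(\<forall>p \<in> carrier G \<times> carrier G. YBE_r3 G f p = YBE_r4 G f p) \<longleftrightarrow>
  (\<forall>g \<in> carrier G. \<forall>h \<in> carrier G. g \<otimes> inv (f g) \<otimes> h \<otimes> f g = h \<otimes> inv (f h) \<otimes> g \<otimes> f h)"
proof
  assume H: "\<forall>p \<in> carrier G \<times> carrier G. YBE_r3 G f p = YBE_r4 G f p"
  show "\<forall>g \<in> carrier G. \<forall>h \<in> carrier G. g \<otimes> inv (f g) \<otimes> h \<otimes> f g = h \<otimes> inv (f h) \<otimes> g \<otimes> f h"
  proof (intro ballI)
    fix g h assume g: "g \<in> carrier G" and h: "h \<in> carrier G"
    have "YBE_r3 G f (inv g, h) = YBE_r4 G f (inv g, h)" using H g h by simp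
    thus "g \<otimes> inv (f g) \<otimes> h \<otimes> f g = h \<otimes> inv (f h) \<otimes> g \<otimes> f h"
      using r34_pt[of "inv g" h] g h by simp
  qed
next
  assume H: "\<forall>g \<in> carrier G. \<forall>h \<in> carrier G. g \<otimes> inv (f g) \<otimes> h \<otimes> f g = h \<otimes> inv (f h) \<otimes> g \<otimes> f h"
  show "\<forall>p \<in> carrier G \<times> carrier G. YBE_r3 G f p = YBE_r4 G f p"
  proof
    fix p assume p: "p \<in> carrier G \<times> carrier G"
    then obtain g h where gh: "p = (g, h)" "g \<in> carrier G" "h \<in> carrier G" by auto
    have "inv g \<otimes> inv (f (inv g)) \<otimes> h \<otimes> f (inv g) = h \<otimes> inv (f h) \<otimes> inv g \<otimes> f h"
      using H[rule_format, of "inv g" h] gh by simp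
    thus "YBE_r3 G f p = YBE_r4 G f p" using r34_pt[of g h] gh by simp
  qed
qed

end

lemma ybe_ctxI:
  assumes "group G" "f \<in> hom G G"
    "\<And>a k. a \<in> endo_comm G f \<Longrightarrow> k \<in> carrier G \<Longrightarrow> f (comm G a k) \<in> group_center G"
  shows "ybe_ctx G f"
  using assms by (simp add: ybe_ctx_def ybe_ctx_axioms_def)

theorem mainTheorem6:
  fixes G :: "('a, 'b) monoid_scheme" and \<psi> :: "'a \<Rightarrow> 'a"
  assumes "group G"
    and "\<psi> \<in> hom G G"
    and "\<psi> ` comm_subgroup G (endo_comm G \<psi>) (carrier G) \<subseteq> group_center G"
  shows "is_YBE_solution (carrier G) (YBE_r1 G \<psi>) \<and> nondegenerate (carrier G) (YBE_r1 G \<psi>)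
     \<and> is_YBE_solution (carrier G) (YBE_r2 G \<psi>) \<and> nondegenerate (carrier G) (YBE_r2 G \<psi>)
     \<and> is_YBE_solution (carrier G) (YBE_r3 G \<psi>) \<and> nondegenerate (carrier G) (YBE_r3 G \<psi>)
     \<and> is_YBE_solution (carrier G) (YBE_r4 G \<psi>) \<and> nondegenerate (carrier G) (YBE_r4 G \<psi>)
     \<and> (\<forall>p \<in> Sigma (carrier G) (\<lambda>_. carrier G). YBE_r1 G \<psi> (YBE_r2 G \<psi> p) = p \<and> YBE_r2 G \<psi> (YBE_r1 G \<psi> p) = p)
     \<and> ((\<forall>p \<in> Sigma (carrier G) (\<lambda>_. carrier G). YBE_r1 G \<psi> p = YBE_r2 G \<psi> p) \<longleftrightarrow> comm_group G)
     \<and> (\<forall>p \<in> Sigma (carrier G) (\<lambda>_. carrier G). YBE_r3 G \<psi> (YBE_r4 G \<psi> p) = p \<and> YBE_r4 G \<psi> (YBE_r3 G \<psi> p) = p)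
     \<and> ((\<forall>p \<in> Sigma (carrier G) (\<lambda>_. carrier G). YBE_r3 G \<psi> p = YBE_r4 G \<psi> p) \<longleftrightarrow>
         (\<forall>g \<in> carrier G. \<forall>h \<in> carrier G.
            g \<otimes>\<^bsub>G\<^esub> inv\<^bsub>G\<^esub> (\<psi> g) \<otimes>\<^bsub>G\<^esub> h \<otimes>\<^bsub>G\<^esub> \<psi> g
            = h \<otimes>\<^bsub>G\<^esub> inv\<^bsub>G\<^esub> (\<psi> h) \<otimes>\<^bsub>G\<^esub> g \<otimes>\<^bsub>G\<^esub> \<psi> h))"
proof -
  have cent: "\<And>a k. a \<in> endo_comm G \<psi> \<Longrightarrow> k \<in> carrier G \<Longrightarrow> \<psi> (comm G a k) \<in> group_center G"
  proof -
    fix a k assume a: "a \<in> endo_comm G \<psi>" and k: "k \<in> carrier G"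
    have "comm G a k \<in> comm_subgroup G (endo_comm G \<psi>) (carrier G)"
      unfolding comm_subgroup_def by (rule generate.incl) (use a k in blast)
    thus "\<psi> (comm G a k) \<in> group_center G" using assms(3) by blast
  qed
  interpret Y: ybe_ctx G \<psi> by (rule ybe_ctxI[OF assms(1) assms(2) cent])
  have inv12: "\<forall>p \<in> Sigma (carrier G) (\<lambda>_. carrier G). YBE_r1 G \<psi> (YBE_r2 G \<psi> p) = p \<and> YBE_r2 G \<psi> (YBE_r1 G \<psi> p) = p"
    by (auto simp: Y.r1_r2 Y.r2_r1)
  have inv34: "\<forall>p \<in> Sigma (carrier G) (\<lambda>_. carrier G). YBE_r3 G \<psi> (YBE_r4 G \<psi> p) = p \<and> YBE_r4 G \<psi> (YBE_r3 G \<psi> p) = p"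
    by (auto simp: Y.r3_r4 Y.r4_r3)
  show ?thesis
    using Y.r1_ybe Y.r1_nondeg Y.r2_ybe Y.r2_nondeg Y.r3_ybe Y.r3_nondeg Y.r4_ybe Y.r4_nondeg
      inv12 inv34 Y.r12_iff Y.r34_iff by blast
qed

end
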